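(* Let $f\in\Gamma_0(X)$ and let $x\in X$ be a minimizer of $f$. Then for every $M\ge 0$, \[ \partial f(x)=\bigcap_{\varepsilon>0}\overline{\operatorname{co}}\big(\partial_\varepsilon f(x)\cup \varepsilon\,\partial_{\varepsilon+M}f(x)\big)=\bigcap_{\varepsilon>0}\overline{\operatorname{co}}\big(\partial_\varepsilon f(x)\cup \varepsilon\,\partial_{\varepsilon+M}f^+(x)\big), \] where $f^+:=\max\{f,0\}$.
   Context: $X$ is a real separated (Hausdorff) locally convex space, with topological dual $X^*$ endowed with the weak$^*$ topology; closures and closed convex hulls $\overline{\operatorname{co}}$ in $X^*$ are taken in the weak$^*$ topology. $\Gamma_0(X)$ denotes the set of proper, convex, lower semicontinuous functions $X\to\mathbb{R}\cup\{+\infty\}$. For $g:X\to\overline{\mathbb{R}}$, $x\in X$ and $\varepsilon\in\mathbb{R}$, the $\varepsilon$-subdifferential is $\partial_\varepsilon g(x)=\{x^*\in X^*:\ g(y)\ge g(x)+\langle x^*,y-x\rangle-\varepsilon\ \forall y\in X\}$ if $g(x)\in\mathbb{R}$ and $\varepsilon\ge0$, and $\partial_\varepsilon g(x)=\emptyset$ otherwise; $\partial g(x):=\partial_0 g(x)$. For $\lambda\in\mathbb{R}$ and a set $A$, $\lambda A=\{\lambda a: a\in A\}$. *)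

theory Defs
  imports "HOL-Analysis.Analysis"
begin

definition locally_convex_space :: "'a::{real_vector,t2_space} itself \<Rightarrow> bool" where
  "locally_convex_space _ \<longleftrightarrow>
     continuous_on UNIV (\<lambda>p::'a \<times> 'a. fst p + snd p) \<and>
     continuous_on UNIV (\<lambda>p::real \<times> 'a. fst p *\<^sub>R snd p) \<and>
     (\<forall>U::'a set. open U \<and> 0 \<in> U \<longrightarrow> (\<exists>V. open V \<and> convex V \<and> 0 \<in> V \<and> V \<subseteq> U))"

text \<open>X* is viewed inside the function
  space 'a => real, whose (product) topology is the topology of pointwise convergence;
  its trace on X* is exactly the weak* topology.\<close>
definition dual_space :: "('a::{real_vector,topological_space} \<Rightarrow> real) set" where
  "dual_space = {l. linear l \<and> continuous_on UNIV l}"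

definition fconv_hull :: "('a \<Rightarrow> real) set \<Rightarrow> ('a \<Rightarrow> real) set" where
  "fconv_hull A = {(\<lambda>y. \<Sum>i\<in>I. c i * g i y) | (I :: nat set) c g.
       finite I \<and> I \<noteq> {} \<and> (\<forall>i\<in>I. 0 \<le> c i \<and> g i \<in> A) \<and> sum c I = 1}"

definition wstar_closed_conv_hull :: "('a::{real_vector,topological_space} \<Rightarrow> real) set \<Rightarrow> ('a \<Rightarrow> real) set" where
  "wstar_closed_conv_hull A = dual_space \<inter> closure (fconv_hull A)"

definition fscale :: "real \<Rightarrow> ('a \<Rightarrow> real) set \<Rightarrow> ('a \<Rightarrow> real) set" where
  "fscale t A = (\<lambda>l y. t * l y) ` A"

definition proper_fun :: "('a \<Rightarrow> ereal) \<Rightarrow> bool" where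
  "proper_fun f \<longleftrightarrow> (\<forall>x. f x \<noteq> -\<infinity>) \<and> (\<exists>x. f x \<noteq> \<infinity>)"

definition convex_efun :: "('a::real_vector \<Rightarrow> ereal) \<Rightarrow> bool" where
  "convex_efun f \<longleftrightarrow> (\<forall>x y t. 0 < t \<and> t < 1 \<longrightarrow>
      f ((1 - t) *\<^sub>R x + t *\<^sub>R y) \<le> ereal (1 - t) * f x + ereal t * f y)"

definition lsc_efun :: "('a::topological_space \<Rightarrow> ereal) \<Rightarrow> bool" where
  "lsc_efun f \<longleftrightarrow> (\<forall>c::real. closed {x. f x \<le> ereal c})"

definition Gamma0 :: "('a::{real_vector,topological_space} \<Rightarrow> ereal) set" where
  "Gamma0 = {f. proper_fun f \<and> convex_efun f \<and> lsc_efun f}"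

definition eps_subdiff :: "real \<Rightarrow> ('a::{real_vector,topological_space} \<Rightarrow> ereal) \<Rightarrow> 'a \<Rightarrow> ('a \<Rightarrow> real) set" where
  "eps_subdiff e g x =
     (if g x \<noteq> \<infinity> \<and> g x \<noteq> -\<infinity> \<and> 0 \<le> e
      then {l \<in> dual_space. \<forall>y. g y \<ge> g x + ereal (l (y - x)) - ereal e}
      else {})"

abbreviation subdiff :: "('a::{real_vector,topological_space} \<Rightarrow> ereal) \<Rightarrow> 'a \<Rightarrow> ('a \<Rightarrow> real) set" where
  "subdiff g x \<equiv> eps_subdiff 0 g x"

end

theory Submission
  imports Defs
begin

lemma closed_eval_le: "closed {l::'a \<Rightarrow> real. l z \<le> c}"
  by (rule closed_Collect_le) (auto intro: continuous_on_product_coordinates)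

lemma fconv_bound:
  assumes "\<forall>g\<in>A. g z \<le> (c::real)" "l \<in> fconv_hull A"
  shows "l z \<le> c"
proof -
  have "\<exists>(I::nat set) cc g. l = (\<lambda>y. \<Sum>i\<in>I. cc i * g i y) \<and>
    finite I \<and> (\<forall>i\<in>I. 0 \<le> cc i \<and> g i \<in> A) \<and> sum cc I = 1"
    using assms(2) unfolding fconv_hull_def by auto
  then obtain I :: "nat set" and cc g where l: "l = (\<lambda>y. \<Sum>i\<in>I. cc i * g i y)" and
    fin: "finite I" and h: "\<forall>i\<in>I. 0 \<le> cc i \<and> g i \<in> A" and s: "sum cc I = 1"
    by blast
  have "l z = (\<Sum>i\<in>I. cc i * g i z)" using l by simp
  also have "\<dots> \<le> (\<Sum>i\<in>I. cc i * c)"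
    by (rule sum_mono) (use h assms(1) in \<open>auto intro: mult_left_mono\<close>)
  also have "\<dots> = c" using s by (simp add: sum_distrib_right[symmetric])
  finally show ?thesis .
qed

lemma hull_bound:
  assumes "\<forall>g\<in>A. g z \<le> (c::real)" "l \<in> wstar_closed_conv_hull A"
  shows "l z \<le> c"
proof -
  have "fconv_hull A \<subseteq> {l. l z \<le> c}" using fconv_bound[OF assms(1)] by blast
  hence "closure (fconv_hull A) \<subseteq> {l. l z \<le> c}"
    by (rule closure_minimal) (rule closed_eval_le)
  thus ?thesis using assms(2) unfolding wstar_closed_conv_hull_def by blast
qed

lemma in_hull: "l \<in> dual_space \<Longrightarrow> l \<in> A \<Longrightarrow> l \<in> wstar_closed_conv_hull A"
proof -
  assume d: "l \<in> dual_space" and a: "l \<in> A"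
  have "l \<in> fconv_hull A" unfolding fconv_hull_def
    apply (rule CollectI)
    apply (rule exI[of _ "{0::nat}"], rule exI[of _ "\<lambda>_. 1::real"], rule exI[of _ "\<lambda>_. l"])
    using a by auto
  thus ?thesis using d closure_subset unfolding wstar_closed_conv_hull_def by blast
qed

lemma small_le:
  assumes "\<forall>e. 0 < e \<and> e \<le> 1 \<longrightarrow> (u::real) \<le> v + e * K"
  shows "u \<le> v"
proof (rule ccontr)
  assume "\<not> u \<le> v"
  hence p: "u - v > 0" by simp
  define e where "e = min 1 ((u - v) / (2 * (\<bar>K\<bar> + 1)))"
  have e0: "0 < e" using p unfolding e_def by (simp add: divide_pos_pos)
  have e1: "e \<le> 1" unfolding e_def by simp
  have "e * K \<le> e * (\<bar>K\<bar> + 1)" using e0 by (intro mult_left_mono) auto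
  also have "\<dots> \<le> (u - v) / (2 * (\<bar>K\<bar> + 1)) * (\<bar>K\<bar> + 1)"
    by (intro mult_right_mono) (auto simp: e_def)
  also have "\<dots> = (u - v) / 2" by (simp add: field_simps)
  finally have "e * K \<le> (u - v)/2" .
  with assms e0 e1 p show False by force
qed

lemma main_eq:
  fixes f :: "'a::{real_vector,t2_space} \<Rightarrow> ereal" and C :: "real \<Rightarrow> ('a \<Rightarrow> real) set"
  assumes fx: "f x = ereal a" and min: "\<forall>y. f x \<le> f y"
    and sub: "\<And>e. 0 < e \<Longrightarrow> subdiff f x \<subseteq> C e"
    and bnd: "\<And>e g y b. 0 < e \<Longrightarrow> e \<le> 1 \<Longrightarrow> g \<in> C e \<Longrightarrow> f y = ereal b \<Longrightarrow>
                 g (y - x) \<le> b - a + e * K"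
  shows "subdiff f x = (\<Inter>e\<in>{0<..}. wstar_closed_conv_hull (C e))"
proof
  show "subdiff f x \<subseteq> (\<Inter>e\<in>{0<..}. wstar_closed_conv_hull (C e))"
  proof
    fix l assume l: "l \<in> subdiff f x"
    hence "l \<in> dual_space" unfolding eps_subdiff_def by (auto split: if_splits)
    thus "l \<in> (\<Inter>e\<in>{0<..}. wstar_closed_conv_hull (C e))"
      using in_hull sub l by blast
  qed
next
  show "(\<Inter>e\<in>{0<..}. wstar_closed_conv_hull (C e)) \<subseteq> subdiff f x"
  proof
    fix l assume l: "l \<in> (\<Inter>e\<in>{0<..}. wstar_closed_conv_hull (C e))"
    have d: "l \<in> dual_space" using l[THEN InterD, of "wstar_closed_conv_hull (C 1)"]
      unfolding wstar_closed_conv_hull_def by auto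
    have "f y \<ge> f x + ereal (l (y - x)) - ereal 0" for y
    proof (cases "f y")
      case (real b)
      have "l (y - x) \<le> b - a"
      proof (rule small_le[where K = K], intro allI impI)
        fix e :: real assume e: "0 < e \<and> e \<le> 1"
        have "l \<in> wstar_closed_conv_hull (C e)" using l e by auto
        thus "l (y - x) \<le> b - a + e * K"
          by (rule hull_bound[rotated]) (use bnd e real in auto)
      qed
      thus ?thesis using real fx by simp
    next
      case PInf thus ?thesis by simp
    next
      case MInf thus ?thesis using min[rule_format, of y] fx by simp
    qed
    thus "l \<in> subdiff f x" using d fx unfolding eps_subdiff_def by auto
  qed
qed

lemma eps_bound:
  assumes "g \<in> eps_subdiff e h x" "h x = ereal a" "h y = ereal b"
  shows "g (y - x) \<le> b - a + e"
proof -
  have "h y \<ge> h x + ereal (g (y - x)) - ereal e"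
    using assms(1) unfolding eps_subdiff_def by (auto split: if_splits)
  thus ?thesis using assms(2,3) by simp
qed

lemma scaled_bound:
  fixes e M D t :: real
  assumes "0 < e" "e \<le> 1" "0 \<le> M" "0 \<le> D" "t \<le> D + (e + M)"
  shows "e * t \<le> D + e * (1 + M)"
proof -
  have "e * t \<le> e * (D + (e + M))" using assms by (intro mult_left_mono) auto
  also have "\<dots> = e * D + e * e + e * M" by (simp add: algebra_simps)
  also have "\<dots> \<le> D + e + e * M"
    using assms by (intro add_mono mult_left_le_one_le mult_le_one) auto
  finally show ?thesis by (simp add: algebra_simps)
qed

theorem lemma1:
  fixes f :: "'a::{real_vector,t2_space} \<Rightarrow> ereal" and x :: 'a and M :: real
  assumes "locally_convex_space TYPE('a)"
    and "f \<in> Gamma0"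
    and "\<forall>y. f x \<le> f y"
    and "M \<ge> 0"
  shows "subdiff f x =
           (\<Inter>e\<in>{0<..}. wstar_closed_conv_hull (eps_subdiff e f x \<union> fscale e (eps_subdiff (e + M) f x)))
       \<and> (\<Inter>e\<in>{0<..}. wstar_closed_conv_hull (eps_subdiff e f x \<union> fscale e (eps_subdiff (e + M) f x)))
         = (\<Inter>e\<in>{0<..}. wstar_closed_conv_hull (eps_subdiff e f x \<union>
                fscale e (eps_subdiff (e + M) (\<lambda>y. max (f y) 0) x)))"
proof -
  note min = assms(3)
  obtain z where z: "f z \<noteq> \<infinity>" "\<forall>y. f y \<noteq> -\<infinity>"
    using assms(2) unfolding Gamma0_def proper_fun_def by auto
  obtain a where fx: "f x = ereal a"
    using z min[rule_format, of z] by (cases "f x") auto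
  have sub0: "subdiff f x \<subseteq> eps_subdiff e f x" if "0 < e" for e
  proof
    fix l assume l: "l \<in> subdiff f x"
    have "f y \<ge> f x + ereal (l (y - x)) - ereal e" for y
    proof -
      have "f y \<ge> f x + ereal (l (y - x)) - ereal 0" using l fx unfolding eps_subdiff_def by auto
      moreover have "f x + ereal (l (y - x)) - ereal e \<le> f x + ereal (l (y - x)) - ereal 0"
        using fx that by simp
      ultimately show ?thesis by (rule order.trans[rotated])
    qed
    thus "l \<in> eps_subdiff e f x" using l fx that unfolding eps_subdiff_def by auto
  qed
  have gen: "subdiff f x = (\<Inter>e\<in>{0<..}. wstar_closed_conv_hull (eps_subdiff e f x \<union>
                fscale e (eps_subdiff (e + M) h x)))"
    if hx: "h x = ereal a'"
      and hy: "\<And>y b. f y = ereal b \<Longrightarrow> \<exists>b'. h y = ereal b' \<and> b' - a' \<le> b - a" for h a'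
  proof (rule main_eq[where K = "2 + M", OF fx min])
    fix e :: real assume "0 < e" thus "subdiff f x \<subseteq> eps_subdiff e f x \<union> fscale e (eps_subdiff (e + M) h x)"
      using sub0 by blast
  next
    fix e g y b assume e: "0 < e" "e \<le> 1"
      and g: "g \<in> eps_subdiff e f x \<union> fscale e (eps_subdiff (e + M) h x)" and fy: "f y = ereal b"
    have ab: "a \<le> b" using min[rule_format, of y] fx fy by simp
    show "g (y - x) \<le> b - a + e * (2 + M)"
      using g
    proof
      assume "g \<in> eps_subdiff e f x"
      hence "g (y - x) \<le> b - a + e" using eps_bound fx fy by blast
      moreover have "0 \<le> e * M" using e assms(4) by simp
      ultimately show ?thesis using e by (simp add: algebra_simps)
    next
      assume "g \<in> fscale e (eps_subdiff (e + M) h x)"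
      then obtain m where gm: "g = (\<lambda>z. e * m z)" and m: "m \<in> eps_subdiff (e + M) h x"
        unfolding fscale_def by auto
      obtain b' where b': "h y = ereal b'" "b' - a' \<le> b - a" using hy fy by blast
      have "m (y - x) \<le> b' - a' + (e + M)" using eps_bound[OF m hx b'(1)] .
      hence "m (y - x) \<le> (b - a) + (e + M)" using b'(2) by linarith
      hence "e * m (y - x) \<le> (b - a) + e * (1 + M)"
        using scaled_bound[OF e assms(4)] ab by simp
      thus ?thesis using gm e by (simp add: algebra_simps)
    qed
  qed
  have g1: "subdiff f x = (\<Inter>e\<in>{0<..}. wstar_closed_conv_hull (eps_subdiff e f x \<union>
                fscale e (eps_subdiff (e + M) f x)))"
    by (rule gen[where h = f and a' = a, OF fx]) auto
  have g2: "subdiff f x = (\<Inter>e\<in>{0<..}. wstar_closed_conv_hull (eps_subdiff e f x \<union>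
                fscale e (eps_subdiff (e + M) (\<lambda>y. max (f y) 0) x)))"
  proof (rule gen[where a' = "max a 0"])
    show "max (f x) 0 = ereal (max a 0)" using fx by (simp add: max_def)
  next
    fix y b assume fy: "f y = ereal b"
    have "a \<le> b" using min[rule_format, of y] fx fy by simp
    thus "\<exists>b'. max (f y) 0 = ereal b' \<and> b' - max a 0 \<le> b - a"
      using fy by (intro exI[of _ "max b 0"]) (auto simp: max_def)
  qed
  show ?thesis using g1 g2 by simp
qed

end
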